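(* The representativity metrics $\rho_1$ and $\rho_\infty$, viewed as set functions $\mathbf{S} \mapsto \rho_1(d)$ and $\mathbf{S}\mapsto\rho_\infty(d)$ on (nonempty) summaries $\mathbf{S}\subseteq\mathbf{W}$ for a fixed workload $\mathbf{W}$ and target distribution $d$, are in general neither monotone nor submodular: there exist a workload and target distribution for which each of $\rho_1$ and $\rho_\infty$ fails to be monotone and fails to be submodular.
   Context: A workload $\mathbf{W}$ is a finite multiset of queries; a summary is $\mathbf{S}\subseteq\mathbf{W}$. There is a finite set $\mathbf{F}$ of features; for each query $q$ and feature $f$, $f(q)$ is a finite multiset of tokens. $f(\mathbf{S}) = \biguplus_{q\in\mathbf{S}} f(q)$, $\mathrm{dom}(\mathbf{S},f)$ is the set of distinct tokens in $f(\mathbf{S})$, $m_{\mathbf{S}}(t,f)$ the multiplicity of $t$ in $f(\mathbf{S})$, $\|\mathbf{S}\| = \sum_{q\in\mathbf{S}}\sum_f|f(q)|$, and $p_{\mathbf{S}}(t) = m_{\mathbf{S}}(t,f)/\|\mathbf{S}\|$ (tokens of distinct features regarded as distinct). For a target distribution $d$ on tokens of $\mathbf{W}$: $\rho_1(d) = 1 - \frac12\sum_f\sum_{t\in\mathrm{dom}(\mathbf{W},f)}|p_{\mathbf{S}}(t)-d(t)|$, $\rho_\infty(d) = 1-\max_f\max_{t\in\mathrm{dom}(\mathbf{W},f)}|p_{\mathbf{S}}(t)-d(t)|$. A set function $g$ is monotone if $A\subseteq B$ implies $g(A)\le g(B)$, and submodular if $g(A)+g(B)\ge g(A\cup B)+g(A\cap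 B)$. *)

theory Defs
  imports Complex_Main "HOL-Library.Multiset"
begin

text \<open>A feature is an index f in the finite set F; feat f q is the finite multiset
  of tokens f(q).  A workload W is a finite multiset of queries, a summary is a
  sub-multiset S of W.  Tokens of distinct features are regarded as distinct,
  so a token is a pair (f, t).\<close>

type_synonym query = nat
type_synonym feature = nat
type_synonym token = nat
type_synonym featfun = "feature \<Rightarrow> query \<Rightarrow> token multiset"

definition featS :: "featfun \<Rightarrow> query multiset \<Rightarrow> feature \<Rightarrow> token multiset" where
  "featS feat S f = \<Sum>\<^sub># (image_mset (feat f) S)"

definition tokdom :: "featfun \<Rightarrow> query multiset \<Rightarrow> feature \<Rightarrow> token set" where
  "tokdom feat S f = set_mset (featS feat S f)"

definition mult_tok :: "featfun \<Rightarrow> query multiset \<Rightarrow> token \<Rightarrow> feature \<Rightarrow> nat" where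
  "mult_tok feat S t f = count (featS feat S f) t"

definition norm_sum :: "feature set \<Rightarrow> featfun \<Rightarrow> query multiset \<Rightarrow> nat" where
  "norm_sum F feat S = (\<Sum>q\<in>#S. \<Sum>f\<in>F. size (feat f q))"

definition p_tok :: "feature set \<Rightarrow> featfun \<Rightarrow> query multiset \<Rightarrow> feature \<Rightarrow> token \<Rightarrow> real" where
  "p_tok F feat S f t = real (mult_tok feat S t f) / real (norm_sum F feat S)"

definition tokens :: "feature set \<Rightarrow> featfun \<Rightarrow> query multiset \<Rightarrow> (feature \<times> token) set" where
  "tokens F feat W = Sigma F (tokdom feat W)"

definition target_dist :: "feature set \<Rightarrow> featfun \<Rightarrow> query multiset \<Rightarrow> (feature \<times> token \<Rightarrow> real) \<Rightarrow> bool" where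
  "target_dist F feat W d \<longleftrightarrow> (\<forall>x\<in>tokens F feat W. d x \<ge> 0) \<and> (\<Sum>x\<in>tokens F feat W. d x) = 1"

definition rho1 :: "feature set \<Rightarrow> featfun \<Rightarrow> query multiset \<Rightarrow> (feature \<times> token \<Rightarrow> real) \<Rightarrow> query multiset \<Rightarrow> real" where
  "rho1 F feat W d S = 1 - (1/2) * (\<Sum>f\<in>F. \<Sum>t\<in>tokdom feat W f. \<bar>p_tok F feat S f t - d (f, t)\<bar>)"

definition rhoinf :: "feature set \<Rightarrow> featfun \<Rightarrow> query multiset \<Rightarrow> (feature \<times> token \<Rightarrow> real) \<Rightarrow> query multiset \<Rightarrow> real" where
  "rhoinf F feat W d S = 1 - Max ((\<lambda>(f, t). \<bar>p_tok F feat S f t - d (f, t)\<bar>) ` tokens F feat W)"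

definition monotone_summ :: "query multiset \<Rightarrow> (query multiset \<Rightarrow> real) \<Rightarrow> bool" where
  "monotone_summ W g \<longleftrightarrow> (\<forall>A B. A \<noteq> {#} \<and> A \<subseteq># B \<and> B \<subseteq># W \<longrightarrow> g A \<le> g B)"

definition submodular_summ :: "query multiset \<Rightarrow> (query multiset \<Rightarrow> real) \<Rightarrow> bool" where
  "submodular_summ W g \<longleftrightarrow> (\<forall>A B. A \<subseteq># W \<and> B \<subseteq># W \<and> A \<inter># B \<noteq> {#} \<longrightarrow>
       g A + g B \<ge> g (A \<union># B) + g (A \<inter># B))"

end

theory Submission
  imports Defs
begin

definition fe :: featfun where "fe = (\<lambda>f q. {#q#})"
definition W0 :: "query multiset" where "W0 = {#0,0,1#}"
definition d0 :: "feature \<times> token \<Rightarrow> real" where "d0 = (\<lambda>(f,t). if t = 0 then 1 else 0)"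

lemma featS_fe: "featS fe S f = S"
  by (induction S) (auto simp: featS_def fe_def)

lemma norm_fe: "norm_sum {0} fe S = size S"
  by (induction S) (auto simp: norm_sum_def fe_def)

lemma dom_W0: "tokdom fe W0 f = {0,1}"
  by (auto simp: tokdom_def featS_fe W0_def)

lemma toks: "tokens {0} fe W0 = {(0,0),(0,1)}"
  by (auto simp: tokens_def dom_W0)

lemma rho1_eq: "rho1 {0} fe W0 d0 S = 1 - (1/2) * (\<bar>p_tok {0} fe S 0 0 - 1\<bar> + \<bar>p_tok {0} fe S 0 1\<bar>)"
  by (simp add: rho1_def dom_W0 d0_def)

lemma rhoinf_eq: "rhoinf {0} fe W0 d0 S = 1 - max \<bar>p_tok {0} fe S 0 0 - 1\<bar> \<bar>p_tok {0} fe S 0 1\<bar>"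
  by (simp add: rhoinf_def toks d0_def)

lemma p_eq: "p_tok {0} fe S f t = real (count S t) / real (size S)"
  by (simp add: p_tok_def mult_tok_def featS_fe norm_fe)

theorem lemma4p3:
  shows "\<exists>(F :: feature set) (feat :: featfun) (W :: query multiset) d.
           finite F \<and> W \<noteq> {#} \<and> target_dist F feat W d \<and>
           \<not> monotone_summ W (rho1 F feat W d) \<and> \<not> submodular_summ W (rho1 F feat W d) \<and>
           \<not> monotone_summ W (rhoinf F feat W d) \<and> \<not> submodular_summ W (rhoinf F feat W d)"
proof (intro exI conjI)
  show "finite {0::nat}" by simp
  show "W0 \<noteq> {#}" by (simp add: W0_def)
  show "target_dist {0} fe W0 d0" by (simp add: target_dist_def toks d0_def)
  have m: "\<not> monotone_summ W0 g" if "g {#0#} = 1" "g {#0,1#} = 1/2" for g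
    unfolding monotone_summ_def
    apply (simp only: not_all not_imp)
    apply (rule exI[of _ "{#0#}"], rule exI[of _ "{#0,1#}"])
    using that by (simp add: W0_def)
  have s: "\<not> submodular_summ W0 g" if "g {#0#} = 1" "g {#0,1#} = 1/2" "g {#0,0#} = 1" "g {#0,0,1#} = 2/3" for g
  proof
    assume h: "submodular_summ W0 g"
    have c: "{#0, 1#} \<subseteq># W0 \<and> {#0, 0#} \<subseteq># W0 \<and> {#0, 1#} \<inter># {#0::nat, 0#} \<noteq> {#}"
      by (simp add: W0_def multiset_eq_iff subseteq_mset_def)
    have "g {#0,1#} + g {#0,0#} \<ge> g ({#0,1#} \<union># {#0,0#}) + g ({#0,1#} \<inter># {#0,0#})"
      using h c unfolding submodular_summ_def by blast
    moreover have u: "{#0,1#} \<union># {#0,0#} = {#0,0,1::nat#}" by (simp add: multiset_eq_iff)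
    moreover have i: "{#0,1#} \<inter># {#0,0#} = {#0::nat#}" by (simp add: multiset_eq_iff)
    ultimately show False using that by simp
  qed
  show "\<not> monotone_summ W0 (rho1 {0} fe W0 d0)"
    by (rule m) (simp_all add: rho1_eq p_eq)
  show "\<not> submodular_summ W0 (rho1 {0} fe W0 d0)"
    by (rule s) (simp_all add: rho1_eq p_eq)
  show "\<not> monotone_summ W0 (rhoinf {0} fe W0 d0)"
    by (rule m) (simp_all add: rhoinf_eq p_eq)
  show "\<not> submodular_summ W0 (rhoinf {0} fe W0 d0)"
    by (rule s) (simp_all add: rhoinf_eq p_eq)
qed

end
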